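(* Let $\phi:[0,1]\to\mathbb R$ be H\"older continuous with exponent $\gamma\in(0,1]$, $\phi(0)=\phi(1)$, and suppose $\phi$ is a valid base function for $b\in\{2,3,\dots\}$ and $\alpha\in(b^{-\gamma},1)$. If $0<\beta<b^{-\gamma}$, then $\psi(t):=\sum_{m=0}^\infty\beta^m\phi(\{b^mt\})$, $t\in[0,1]$, is also a valid base function for $b$ and $\alpha$.
   Context: $\{x\}$ denotes the fractional part of $x\ge0$. $U_1,U_2,\dots$ are i.i.d. uniform on $\{0,1,\dots,b-1\}$ and $R_m:=\sum_{i=1}^mU_ib^{i-1}$. Definition: a function $\phi:[0,1]\to\mathbb R$ that is H\"older continuous with exponent $\gamma\in(0,1]$ and satisfies $\phi(0)=\phi(1)$ is called a valid base function for $b$ and $\alpha$ (where $\alpha b^\gamma>1$, $\alpha<1$) if the random variable $Z:=\sum_{m=1}^\infty\alpha^{-m}\big(\phi((R_m+1)b^{-m})-\phi(R_mb^{-m})\big)$ is not almost surely equal to $0$. *)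

theory Defs
  imports "HOL-Probability.Probability"
begin

definition holder_on_unit :: "real \<Rightarrow> (real \<Rightarrow> real) \<Rightarrow> bool" where
  "holder_on_unit \<gamma> \<phi> \<longleftrightarrow>
     (\<exists>C. \<forall>x\<in>{0..1}. \<forall>y\<in>{0..1}. \<bar>\<phi> x - \<phi> y\<bar> \<le> C * \<bar>x - y\<bar> powr \<gamma>)"

text \<open>Probability space of i.i.d. digits U_1, U_2, ... uniform on {0,...,b-1}
  (coordinate omega i is U_i; coordinate 0 is unused).\<close>
definition digit_space :: "nat \<Rightarrow> (nat \<Rightarrow> nat) measure" where
  "digit_space b = PiM UNIV (\<lambda>_::nat. measure_pmf (pmf_of_set {0..<b}))"

definition R_digits :: "nat \<Rightarrow> nat \<Rightarrow> (nat \<Rightarrow> nat) \<Rightarrow> nat" where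
  "R_digits b m \<omega> = (\<Sum>i=1..m. \<omega> i * b ^ (i - 1))"

definition Z_var :: "nat \<Rightarrow> real \<Rightarrow> (real \<Rightarrow> real) \<Rightarrow> (nat \<Rightarrow> nat) \<Rightarrow> real" where
  "Z_var b \<alpha> \<phi> \<omega> =
     (\<Sum>m. (inverse \<alpha>) ^ (Suc m) *
        (\<phi> ((real (R_digits b (Suc m) \<omega>) + 1) / real b ^ Suc m)
         - \<phi> (real (R_digits b (Suc m) \<omega>) / real b ^ Suc m)))"

definition valid_base_function :: "nat \<Rightarrow> real \<Rightarrow> (real \<Rightarrow> real) \<Rightarrow> bool" where
  "valid_base_function b \<alpha> \<phi> \<longleftrightarrow>
     (\<exists>\<gamma>. 0 < \<gamma> \<and> \<gamma> \<le> 1 \<and> holder_on_unit \<gamma> \<phi> \<and> \<phi> 0 = \<phi> 1 \<and>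
          \<alpha> * real b powr \<gamma> > 1 \<and> \<alpha> < 1 \<and>
          \<not> (AE \<omega> in digit_space b. Z_var b \<alpha> \<phi> \<omega> = 0))"

end

theory Submission
  imports Defs
begin

lemma R_Suc: "R_digits b (Suc n) \<omega> = R_digits b n \<omega> + \<omega> (Suc n) * b ^ n"
  by (simp add: R_digits_def sum.cl_ivl_Suc)

lemma R_lt: assumes "\<And>i. \<omega> i < b" shows "R_digits b n \<omega> < b ^ n"
proof (induction n)
  case 0 show ?case by (simp add: R_digits_def)
next
  case (Suc n)
  have "\<omega> (Suc n) \<le> b - 1" using assms[of "Suc n"] by simp
  hence "\<omega> (Suc n) * b^n \<le> (b - 1) * b^n" by simp
  hence "R_digits b n \<omega> + \<omega> (Suc n) * b ^ n < b^n + (b-1)*b^n" using Suc by linarith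
  also have "... = b^Suc n" using assms[of 0] by (cases b) auto
  finally show ?case by (simp add: R_Suc)
qed

lemma R_split: "\<exists>S. R_digits b (j + k) \<omega> = R_digits b j \<omega> + b ^ j * S"
proof (induction k)
  case 0 show ?case by (rule exI[of _ 0]) simp
next
  case (Suc k)
  then obtain S where S: "R_digits b (j + k) \<omega> = R_digits b j \<omega> + b ^ j * S" by blast
  show ?case
    by (rule exI[of _ "S + \<omega> (Suc (j+k)) * b ^ k"]) (simp add: R_Suc S power_add algebra_simps)
qed

lemma term_eq:
  fixes \<phi> :: "real \<Rightarrow> real"
  assumes dig: "\<And>i. \<omega> i < b" and p01: "\<phi> 0 = \<phi> 1"
  shows "\<phi> (frac (real b ^ k * ((real (R_digits b n \<omega>) + 1) / real b ^ n)))
           - \<phi> (frac (real b ^ k * (real (R_digits b n \<omega>) / real b ^ n)))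
     = (if k < n then \<phi> ((real (R_digits b (n-k) \<omega>) + 1) / real b ^ (n-k))
                        - \<phi> (real (R_digits b (n-k) \<omega>) / real b ^ (n-k)) else 0)"
proof (cases "k < n")
  case True
  define j where "j = n - k"
  have n: "n = j + k" using True j_def by simp
  have bpos: "b > 0" using dig[of 0] by simp
  obtain S where S: "R_digits b n \<omega> = R_digits b j \<omega> + b ^ j * S"
    using R_split[of b j k \<omega>] n by blast
  have Rj: "R_digits b j \<omega> < b ^ j" by (rule R_lt[OF dig])
  have Rj': "real (R_digits b j \<omega>) < real b ^ j"
    by (metis Rj of_nat_less_iff of_nat_power)
  have Sr: "real (R_digits b n \<omega>) = real (R_digits b j \<omega>) + real b ^ j * real S"
    using S by simp
  have bn: "real b ^ n = real b ^ j * real b ^ k" using n by (simp add: power_add)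
  have e1: "real b ^ k * (real (R_digits b n \<omega>) / real b ^ n)
      = real S + real (R_digits b j \<omega>) / real b ^ j"
    using bpos by (simp add: Sr bn field_simps)
  have e2: "real b ^ k * ((real (R_digits b n \<omega>) + 1) / real b ^ n)
      = real S + (real (R_digits b j \<omega>) + 1) / real b ^ j"
    using bpos by (simp add: Sr bn field_simps)
  have f1: "frac (real b ^ k * (real (R_digits b n \<omega>) / real b ^ n))
       = real (R_digits b j \<omega>) / real b ^ j"
    unfolding e1 
    by (subst frac_add_int_left) (use Rj' bpos in auto)
  have f2: "\<phi> (frac (real b ^ k * ((real (R_digits b n \<omega>) + 1) / real b ^ n)))
       = \<phi> ((real (R_digits b j \<omega>) + 1) / real b ^ j)"
  proof (cases "R_digits b j \<omega> + 1 < b ^ j")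
    case True
    hence "real (R_digits b j \<omega>) + 1 < real b ^ j"
      by (metis of_nat_1 of_nat_add of_nat_less_iff of_nat_power)
    then show ?thesis unfolding e2 using bpos
      by (subst frac_add_int_left) auto
  next
    case False
    hence "R_digits b j \<omega> + 1 = b ^ j" using Rj by simp
    hence "real (R_digits b j \<omega>) + 1 = real b ^ j"
      by (metis of_nat_1 of_nat_add of_nat_power)
    hence "(real (R_digits b j \<omega>) + 1) / real b ^ j = 1" using bpos by simp
    then show ?thesis unfolding e2 using p01
      by (subst frac_add_int_left) auto
  qed
  show ?thesis using True f1 f2 j_def by simp
next
  case False
  have bpos: "b > 0" using dig[of 0] by simp
  have pd: "real b ^ k / real b ^ n = real b ^ (k - n)"
    using False bpos by (simp add: power_diff)
  have "real b ^ k * (real (R_digits b n \<omega>) / real b ^ n) = real (R_digits b n \<omega>) * (real b ^ k / real b ^ n)"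
    by simp
  also have "\<dots> = real (R_digits b n \<omega> * b ^ (k - n))" using pd by simp
  finally have 1: "real b ^ k * (real (R_digits b n \<omega>) / real b ^ n) = real (R_digits b n \<omega> * b ^ (k - n))" .
  have "real b ^ k * ((real (R_digits b n \<omega>) + 1) / real b ^ n) = (real (R_digits b n \<omega>) + 1) * (real b ^ k / real b ^ n)"
    by simp
  also have "\<dots> = real ((R_digits b n \<omega> + 1) * b ^ (k - n))" using pd by (simp add: algebra_simps)
  finally have 2: "real b ^ k * ((real (R_digits b n \<omega>) + 1) / real b ^ n) = real ((R_digits b n \<omega> + 1) * b ^ (k - n))" .
  have z: "\<And>m::nat. frac (real m) = 0" by simp
  show ?thesis using False by (simp only: 1 2 z) simp
qed

lemma periodic_holder_le:
  fixes \<phi> :: "real \<Rightarrow> real"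
  assumes H: "\<forall>x\<in>{0..1}. \<forall>y\<in>{0..1}. \<bar>\<phi> x - \<phi> y\<bar> \<le> C * \<bar>x - y\<bar> powr \<gamma>"
    and p01: "\<phi> 0 = \<phi> 1" and g: "0 < \<gamma>" and C: "C \<ge> 0" and M: "\<forall>x\<in>{0..1}. \<bar>\<phi> x\<bar> \<le> M"
    and uv: "u \<le> v"
  shows "\<bar>\<phi> (frac u) - \<phi> (frac v)\<bar> \<le> (2*C + 2*M) * \<bar>u - v\<bar> powr \<gamma>"
proof -
  have M0: "M \<ge> 0" using M by force
  have fu: "frac u \<in> {0..1}" "frac v \<in> {0..1}" using frac_lt_1[of u] frac_lt_1[of v] by auto
  have d: "\<bar>u - v\<bar> = v - u" using uv by simp
  have dp: "0 \<le> \<bar>u - v\<bar> powr \<gamma>" by simp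
  show ?thesis
  proof (cases "v - u \<ge> 1")
    case True
    have "1 \<le> \<bar>u - v\<bar> powr \<gamma>" using True g d by (intro ge_one_powr_ge_zero) auto
    moreover have "\<bar>\<phi> (frac u) - \<phi> (frac v)\<bar> \<le> 2 * M"
    proof -
      have "\<bar>\<phi> (frac u)\<bar> \<le> M" "\<bar>\<phi> (frac v)\<bar> \<le> M" using M fu by auto
      then show ?thesis by linarith
    qed
    ultimately have "\<bar>\<phi> (frac u) - \<phi> (frac v)\<bar> \<le> 2 * M * \<bar>u - v\<bar> powr \<gamma>"
    proof -
      have "2 * M * 1 \<le> 2 * M * \<bar>u - v\<bar> powr \<gamma>"
        using M0 \<open>1 \<le> \<bar>u - v\<bar> powr \<gamma>\<close> by (intro mult_left_mono) auto
      then show ?thesis using \<open>\<bar>\<phi> (frac u) - \<phi> (frac v)\<bar> \<le> 2 * M\<close> by linarith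
    qed
    moreover have "0 \<le> 2 * C * \<bar>u - v\<bar> powr \<gamma>" using C by simp
    ultimately show ?thesis by (simp add: algebra_simps)
  next
    case False
    have "\<lfloor>u\<rfloor> \<le> \<lfloor>v\<rfloor>" using uv floor_mono by blast
    moreover have "\<lfloor>v\<rfloor> \<le> \<lfloor>u\<rfloor> + 1" using False by linarith
    ultimately consider "\<lfloor>v\<rfloor> = \<lfloor>u\<rfloor>" | "\<lfloor>v\<rfloor> = \<lfloor>u\<rfloor> + 1" by linarith
    then have "\<bar>\<phi> (frac u) - \<phi> (frac v)\<bar> \<le> 2 * C * \<bar>u - v\<bar> powr \<gamma>"
    proof cases
      case 1
      have "\<bar>frac u - frac v\<bar> = \<bar>u - v\<bar>" using 1 by (simp add: frac_def)
      hence "\<bar>\<phi> (frac u) - \<phi> (frac v)\<bar> \<le> C * \<bar>u - v\<bar> powr \<gamma>" using H fu by metis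
      also have "\<dots> \<le> 2 * C * \<bar>u - v\<bar> powr \<gamma>" using C dp by (simp add: mult_right_mono)
      finally show ?thesis .
    next
      case 2
      have a: "\<bar>frac u - 1\<bar> \<le> \<bar>u - v\<bar>" using 2 frac_lt_1[of u] d by (simp add: frac_def) linarith
      have b: "\<bar>0 - frac v\<bar> \<le> \<bar>u - v\<bar>" using 2 d by (simp add: frac_def) linarith
      have "\<bar>\<phi> (frac u) - \<phi> (frac v)\<bar> \<le> \<bar>\<phi> (frac u) - \<phi> 1\<bar> + \<bar>\<phi> 0 - \<phi> (frac v)\<bar>"
        using p01 by linarith
      also have "\<dots> \<le> C * \<bar>frac u - 1\<bar> powr \<gamma> + C * \<bar>0 - frac v\<bar> powr \<gamma>"
      proof (rule add_mono)
        show "\<bar>\<phi> (frac u) - \<phi> 1\<bar> \<le> C * \<bar>frac u - 1\<bar> powr \<gamma>"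
          using H fu(1) by (meson atLeastAtMost_iff order_refl zero_le_one)
        show "\<bar>\<phi> 0 - \<phi> (frac v)\<bar> \<le> C * \<bar>0 - frac v\<bar> powr \<gamma>"
          using H fu(2) by (meson atLeastAtMost_iff order_refl zero_le_one)
      qed
      also have "\<dots> \<le> C * \<bar>u - v\<bar> powr \<gamma> + C * \<bar>u - v\<bar> powr \<gamma>"
        using a b g C by (intro add_mono mult_left_mono powr_mono2) auto
      finally show ?thesis by simp
    qed
    moreover have "0 \<le> 2 * M * \<bar>u - v\<bar> powr \<gamma>" using M0 by simp
    ultimately show ?thesis by (simp add: algebra_simps)
  qed
qed

lemma periodic_holder:
  fixes \<phi> :: "real \<Rightarrow> real"
  assumes H: "\<forall>x\<in>{0..1}. \<forall>y\<in>{0..1}. \<bar>\<phi> x - \<phi> y\<bar> \<le> C * \<bar>x - y\<bar> powr \<gamma>"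
    and p01: "\<phi> 0 = \<phi> 1" and g: "0 < \<gamma>" and C: "C \<ge> 0" and M: "\<forall>x\<in>{0..1}. \<bar>\<phi> x\<bar> \<le> M"
  shows "\<bar>\<phi> (frac u) - \<phi> (frac v)\<bar> \<le> (2*C + 2*M) * \<bar>u - v\<bar> powr \<gamma>"
proof (cases "u \<le> v")
  case True then show ?thesis using periodic_holder_le[OF assms] by blast
next
  case False
  then have "\<bar>\<phi> (frac v) - \<phi> (frac u)\<bar> \<le> (2*C + 2*M) * \<bar>v - u\<bar> powr \<gamma>"
    using periodic_holder_le[OF assms, of v u] by simp
  then show ?thesis by (simp add: abs_minus_commute)
qed

lemma psi_holder:
  fixes \<phi> :: "real \<Rightarrow> real"
  assumes per: "\<And>u v. \<bar>\<phi> (frac u) - \<phi> (frac v)\<bar> \<le> K * \<bar>u - v\<bar> powr \<gamma>"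
    and bnd: "\<And>x. \<bar>\<phi> (frac x)\<bar> \<le> M"
    and be: "0 \<le> \<beta>" "\<beta> < 1" and q: "\<beta> * real b powr \<gamma> < 1" and b: "b > 0" and g: "\<gamma> > 0"
  shows "holder_on_unit \<gamma> (\<lambda>t. \<Sum>m. \<beta> ^ m * \<phi> (frac (real b ^ m * t)))"
proof -
  define r where "r = \<beta> * real b powr \<gamma>"
  have r0: "0 \<le> r" "r < 1" using be q by (auto simp: r_def)
  have sumr: "summable (\<lambda>m. r ^ m)" using r0 by (intro summable_geometric) auto
  have sumf: "summable (\<lambda>m. \<beta> ^ m * \<phi> (frac (real b ^ m * t)))" for t
  proof (rule summable_comparison_test'[of "\<lambda>m. \<beta> ^ m * M" 0])
    show "summable (\<lambda>m. \<beta> ^ m * M)" using be by (intro summable_mult2 summable_geometric) auto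
    show "norm (\<beta> ^ m * \<phi> (frac (real b ^ m * t))) \<le> \<beta> ^ m * M" for m
      using bnd be by (simp add: abs_mult mult_left_mono)
  qed
  have "\<bar>(\<Sum>m. \<beta> ^ m * \<phi> (frac (real b ^ m * x))) - (\<Sum>m. \<beta> ^ m * \<phi> (frac (real b ^ m * y)))\<bar>
        \<le> K / (1 - r) * \<bar>x - y\<bar> powr \<gamma>" for x y
  proof -
    define f where "f m = \<beta> ^ m * (\<phi> (frac (real b ^ m * x)) - \<phi> (frac (real b ^ m * y)))" for m
    define g where "g m = K * \<bar>x - y\<bar> powr \<gamma> * r ^ m" for m
    have fg: "\<bar>f m\<bar> \<le> g m" for m
    proof -
      have bm: "\<bar>real b ^ m * x - real b ^ m * y\<bar> = real b ^ m * \<bar>x - y\<bar>"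
        by (simp add: abs_mult right_diff_distrib[symmetric])
      have "(real b ^ m * \<bar>x - y\<bar>) powr \<gamma> = (real b ^ m) powr \<gamma> * \<bar>x - y\<bar> powr \<gamma>"
        by (simp add: powr_mult)
      also have "(real b ^ m) powr \<gamma> = (real b powr \<gamma>) ^ m"
        using b by (simp add: powr_power powr_realpow[symmetric] powr_powr mult.commute)
      finally have pw: "(real b ^ m * \<bar>x - y\<bar>) powr \<gamma> = (real b powr \<gamma>) ^ m * \<bar>x - y\<bar> powr \<gamma>" .
      have "\<bar>f m\<bar> = \<beta> ^ m * \<bar>\<phi> (frac (real b ^ m * x)) - \<phi> (frac (real b ^ m * y))\<bar>"
        using be by (simp add: f_def abs_mult)
      also have "\<dots> \<le> \<beta> ^ m * (K * (real b ^ m * \<bar>x - y\<bar>) powr \<gamma>)"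
        using per[of "real b ^ m * x" "real b ^ m * y"] be bm by (intro mult_left_mono) auto
      also have "\<dots> = g m" unfolding g_def pw r_def by (simp add: power_mult_distrib)
      finally show ?thesis .
    qed
    have sg: "summable g" unfolding g_def by (intro summable_mult sumr)
    have saf: "summable (\<lambda>m. \<bar>f m\<bar>)"
      by (rule summable_comparison_test'[OF sg, of 0]) (use fg in auto)
    have "(\<Sum>m. \<beta> ^ m * \<phi> (frac (real b ^ m * x))) - (\<Sum>m. \<beta> ^ m * \<phi> (frac (real b ^ m * y))) = suminf f"
      unfolding f_def by (subst suminf_diff[OF sumf sumf]) (simp add: right_diff_distrib)
    moreover have "\<bar>suminf f\<bar> \<le> (\<Sum>m. \<bar>f m\<bar>)" by (rule summable_rabs[OF saf])
    moreover have "(\<Sum>m. \<bar>f m\<bar>) \<le> suminf g" by (rule suminf_le[OF fg saf sg])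
    moreover have "suminf g = K * \<bar>x - y\<bar> powr \<gamma> * (1 / (1 - r))"
      unfolding g_def using r0 by (subst suminf_mult) (auto intro: sumr simp: suminf_geometric)
    ultimately show ?thesis by simp
  qed
  then show ?thesis unfolding holder_on_unit_def by blast
qed

lemma Z_identity:
  fixes \<phi> :: "real \<Rightarrow> real"
  assumes dig: "\<And>i. \<omega> i < b" and p01: "\<phi> 0 = \<phi> 1"
   and H: "\<forall>x\<in>{0..1}. \<forall>y\<in>{0..1}. \<bar>\<phi> x - \<phi> y\<bar> \<le> C * \<bar>x - y\<bar> powr \<gamma>"
   and bnd: "\<And>x. \<bar>\<phi> (frac x)\<bar> \<le> M"
   and be: "0 < \<beta>" "\<beta> < \<alpha>" and al: "real b powr (-\<gamma>) < \<alpha>" and al1: "\<alpha> < 1"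
  shows "Z_var b \<alpha> (\<lambda>t. \<Sum>m. \<beta> ^ m * \<phi> (frac (real b ^ m * t))) \<omega>
           = Z_var b \<alpha> \<phi> \<omega> * (\<Sum>k. (\<beta>/\<alpha>)^k)"
proof -
  have bpos: "b > 0" using dig[of 0] by simp
  have a0: "\<alpha> > 0" using be by simp
  define R where "R j = R_digits b j \<omega>" for j
  define D where "D j = \<phi> ((real (R j) + 1) / real b ^ j) - \<phi> (real (R j) / real b ^ j)" for j
  define a where "a i = inverse \<alpha> ^ Suc i * D (Suc i)" for i
  define c where "c l = (\<beta>/\<alpha>)^l" for l
  define \<psi> where "\<psi> t = (\<Sum>m. \<beta> ^ m * \<phi> (frac (real b ^ m * t)))" for t
  have be1: "\<beta> < 1" using be al1 by simp
  have sumf: "summable (\<lambda>m. \<beta> ^ m * \<phi> (frac (real b ^ m * t)))" for t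
  proof (rule summable_comparison_test'[of "\<lambda>m. \<beta> ^ m * M" 0])
    show "summable (\<lambda>m. \<beta> ^ m * M)" using be be1 by (intro summable_mult2 summable_geometric) auto
    show "norm (\<beta> ^ m * \<phi> (frac (real b ^ m * t))) \<le> \<beta> ^ m * M" for m
      using bnd be by (simp add: abs_mult mult_left_mono)
  qed
  have psidiff: "\<psi> ((real (R n) + 1) / real b ^ n) - \<psi> (real (R n) / real b ^ n)
      = (\<Sum>k<n. \<beta> ^ k * D (n - k))" for n
  proof -
    have "\<psi> ((real (R n) + 1) / real b ^ n) - \<psi> (real (R n) / real b ^ n)
       = (\<Sum>k. \<beta> ^ k * (\<phi> (frac (real b ^ k * ((real (R n) + 1) / real b ^ n)))
           - \<phi> (frac (real b ^ k * (real (R n) / real b ^ n)))))"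
      unfolding \<psi>_def by (subst suminf_diff[OF sumf sumf]) (simp add: right_diff_distrib)
    also have "\<dots> = (\<Sum>k. if k < n then \<beta> ^ k * D (n - k) else 0)"
      unfolding R_def D_def by (subst term_eq[OF dig p01]) (intro arg_cong[where f=suminf] ext, simp)
    also have "\<dots> = (\<Sum>k<n. \<beta> ^ k * D (n - k))"
      by (subst suminf_finite[of "{..<n}"]) auto
    finally show ?thesis .
  qed
  have inner: "inverse \<alpha> ^ Suc m * (\<Sum>k<Suc m. \<beta> ^ k * D (Suc m - k)) = (\<Sum>i\<le>m. a i * c (m - i))" for m
  proof -
    have "(\<Sum>k<Suc m. \<beta> ^ k * D (Suc m - k)) = (\<Sum>i<Suc m. \<beta> ^ (Suc m - Suc i) * D (Suc m - (Suc m - Suc i)))"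
      by (rule sum.nat_diff_reindex[symmetric])
    also have "\<dots> = (\<Sum>i\<le>m. \<beta> ^ (m - i) * D (Suc i))"
      unfolding lessThan_Suc_atMost by (intro sum.cong) (auto simp: Suc_diff_le)
    finally have "inverse \<alpha> ^ Suc m * (\<Sum>k<Suc m. \<beta> ^ k * D (Suc m - k))
        = (\<Sum>i\<le>m. inverse \<alpha> ^ Suc m * (\<beta> ^ (m - i) * D (Suc i)))"
      by (simp add: sum_distrib_left)
    also have "\<dots> = (\<Sum>i\<le>m. a i * c (m - i))"
    proof (intro sum.cong refl)
      fix i assume "i \<in> {..m}"
      then have "Suc m = Suc i + (m - i)" by simp
      then have "inverse \<alpha> ^ Suc m = inverse \<alpha> ^ Suc i * inverse \<alpha> ^ (m - i)"
        by (metis power_add)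
      then show "inverse \<alpha> ^ Suc m * (\<beta> ^ (m - i) * D (Suc i)) = a i * c (m - i)"
        unfolding a_def c_def by (simp add: divide_inverse power_mult_distrib mult_ac) blast
    qed
    finally show ?thesis .
  qed
  have Zpsi: "Z_var b \<alpha> \<psi> \<omega> = (\<Sum>m. \<Sum>i\<le>m. a i * c (m - i))"
  proof -
    have pd': "\<psi> ((real (R_digits b n \<omega>) + 1) / real b ^ n) - \<psi> (real (R_digits b n \<omega>) / real b ^ n)
      = (\<Sum>k<n. \<beta> ^ k * D (n - k))" for n using psidiff[of n] unfolding R_def .
    show ?thesis unfolding Z_var_def
      by (intro arg_cong[where f=suminf] ext) (simp only: pd' inner)
  qed
  have Zphi: "Z_var b \<alpha> \<phi> \<omega> = (\<Sum>i. a i)"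
    unfolding Z_var_def a_def D_def R_def by simp
  define q where "q = real b powr (-\<gamma>)"
  have q0: "0 < q" using bpos by (simp add: q_def)
  have Dbound: "\<bar>D j\<bar> \<le> C * q ^ j" for j
  proof -
    have "R_digits b j \<omega> < b ^ j" by (rule R_lt) (rule dig)
    then have Rj: "R j + 1 \<le> b ^ j" unfolding R_def by simp
    have Rj': "real (R j) + 1 \<le> real b ^ j" by (metis Rj of_nat_1 of_nat_add of_nat_le_iff of_nat_power)
    have x1: "(real (R j) + 1) / real b ^ j \<in> {0..1}" using Rj' bpos by (simp add: field_simps)
    have x2: "real (R j) / real b ^ j \<in> {0..1}" using Rj Rj' bpos by (simp add: field_simps)
    have "\<bar>D j\<bar> \<le> C * \<bar>(real (R j) + 1) / real b ^ j - real (R j) / real b ^ j\<bar> powr \<gamma>"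
      unfolding D_def using H x1 x2 by blast
    moreover have "\<bar>(real (R j) + 1) / real b ^ j - real (R j) / real b ^ j\<bar> = 1 / real b ^ j"
      using bpos by (simp add: diff_divide_distrib[symmetric])
    moreover have "(1 / real b ^ j) powr \<gamma> = q ^ j"
    proof -
      have "1 / real b ^ j = real b powr (- real j)"
        using bpos by (simp add: powr_minus_divide powr_realpow)
      then have "(1 / real b ^ j) powr \<gamma> = real b powr (- real j * \<gamma>)" by (simp add: powr_powr)
      also have "\<dots> = q ^ j" unfolding q_def using bpos by (simp add: powr_power)
      finally show ?thesis .
    qed
    ultimately show ?thesis by simp
  qed
  have qa: "q / \<alpha> < 1" "0 \<le> q / \<alpha>" using al a0 q0 by (auto simp: q_def)
  have sa: "summable (\<lambda>i. norm (a i))"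
  proof (rule summable_comparison_test'[of "\<lambda>i. \<bar>C\<bar> * (q / \<alpha>) * (q / \<alpha>) ^ i" 0])
    show "summable (\<lambda>i. \<bar>C\<bar> * (q / \<alpha>) * (q / \<alpha>) ^ i)"
      using qa by (intro summable_mult summable_geometric) auto
    fix i
    have "norm (norm (a i)) = inverse \<alpha> ^ Suc i * \<bar>D (Suc i)\<bar>"
      using a0 by (simp add: a_def abs_mult)
    also have "\<dots> \<le> inverse \<alpha> ^ Suc i * (\<bar>C\<bar> * q ^ Suc i)"
    proof (rule mult_left_mono)
      have "C * q ^ Suc i \<le> \<bar>C\<bar> * q ^ Suc i" using q0 by (intro mult_right_mono) auto
      then show "\<bar>D (Suc i)\<bar> \<le> \<bar>C\<bar> * q ^ Suc i" using Dbound[of "Suc i"] by linarith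
      show "0 \<le> inverse \<alpha> ^ Suc i" using a0 by simp
    qed
    also have "\<dots> = \<bar>C\<bar> * (q / \<alpha>) * (q / \<alpha>) ^ i"
      by (simp add: divide_inverse power_mult_distrib mult_ac)
    finally show "norm (norm (a i)) \<le> \<bar>C\<bar> * (q / \<alpha>) * (q / \<alpha>) ^ i" .
  qed
  have ba: "\<beta> / \<alpha> < 1" "0 < \<beta> / \<alpha>" using be a0 by auto
  have sc: "summable (\<lambda>l. norm (c l))"
    unfolding c_def using ba by (simp add: norm_power summable_geometric)
  have "Z_var b \<alpha> \<psi> \<omega> = (\<Sum>i. a i) * (\<Sum>l. c l)"
    unfolding Zpsi by (rule Cauchy_product[OF sa sc, symmetric])
  then show ?thesis unfolding Zphi c_def \<psi>_def .
qed

theorem propositionA4: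
  fixes \<phi> :: "real \<Rightarrow> real" and b :: nat and \<alpha> \<beta> \<gamma> :: real
  assumes "b \<ge> 2"
    and "0 < \<gamma>" "\<gamma> \<le> 1"
    and "holder_on_unit \<gamma> \<phi>"
    and "\<phi> 0 = \<phi> 1"
    and "real b powr (-\<gamma>) < \<alpha>" "\<alpha> < 1"
    and "valid_base_function b \<alpha> \<phi>"
    and "0 < \<beta>" "\<beta> < real b powr (-\<gamma>)"
  shows "valid_base_function b \<alpha> (\<lambda>t. \<Sum>m. \<beta> ^ m * \<phi> (frac (real b ^ m * t)))"
proof -
  define \<psi> where "\<psi> t = (\<Sum>m. \<beta> ^ m * \<phi> (frac (real b ^ m * t)))" for t
  obtain C where H: "\<forall>x\<in>{0..1}. \<forall>y\<in>{0..1}. \<bar>\<phi> x - \<phi> y\<bar> \<le> C * \<bar>x - y\<bar> powr \<gamma>"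
    using assms(4) unfolding holder_on_unit_def by blast
  have C0: "C \<ge> 0" using H[rule_format, of 0 1] by simp
  define M where "M = \<bar>\<phi> 0\<bar> + C"
  have Mb: "\<forall>x\<in>{0..1}. \<bar>\<phi> x\<bar> \<le> M"
  proof
    fix x :: real assume x: "x \<in> {0..1}"
    have "\<bar>\<phi> x - \<phi> 0\<bar> \<le> C * \<bar>x - 0\<bar> powr \<gamma>"
      using H x by (meson atLeastAtMost_iff order_refl zero_le_one)
    also have "\<dots> \<le> C * 1"
      using x C0 assms(2) by (intro mult_left_mono) (auto intro: powr_le_one_le simp: powr_le1)
    finally show "\<bar>\<phi> x\<bar> \<le> M" unfolding M_def by linarith
  qed
  have bnd: "\<bar>\<phi> (frac x)\<bar> \<le> M" for x
    using Mb frac_lt_1[of x] frac_ge_0[of x] by auto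
  have per: "\<bar>\<phi> (frac u) - \<phi> (frac v)\<bar> \<le> (2*C + 2*M) * \<bar>u - v\<bar> powr \<gamma>" for u v
    by (rule periodic_holder[OF H assms(5) assms(2) C0 Mb])
  have bpos: "b > 0" using assms(1) by simp
  have bg: "real b powr \<gamma> > 0" using bpos by simp
  have inv: "real b powr (-\<gamma>) = 1 / real b powr \<gamma>" by (rule powr_minus_divide)
  have bl1: "real b powr (-\<gamma>) < 1"
    using assms(6,7) by simp
  have qb: "\<beta> * real b powr \<gamma> < 1"
    using assms(10) bg unfolding inv by (simp add: field_simps)
  have ab: "\<alpha> * real b powr \<gamma> > 1"
    using assms(6) bg unfolding inv by (simp add: field_simps)
  have hold: "holder_on_unit \<gamma> \<psi>"
    unfolding \<psi>_def
    by (rule psi_holder[OF per bnd]) (use assms bl1 qb bpos in auto)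
  have p01: "\<psi> 0 = \<psi> 1"
  proof -
    have z: "frac (real b ^ m) = 0" for m
      by (metis frac_eq_0_iff Ints_of_nat of_nat_power)
    show ?thesis unfolding \<psi>_def by (simp add: z)
  qed
  have nAE: "\<not> (AE \<omega> in digit_space b. Z_var b \<alpha> \<phi> \<omega> = 0)"
    using assms(8) unfolding valid_base_function_def by blast
  have AEdig: "AE \<omega> in digit_space b. \<forall>i. \<omega> i < b"
    unfolding digit_space_def AE_all_countable
  proof
    fix i
    have "AE x in measure_pmf (pmf_of_set {0..<b}). x < b"
      using bpos by (subst AE_measure_pmf_iff) (auto simp: set_pmf_of_set)
    then show "AE \<omega> in PiM UNIV (\<lambda>_::nat. measure_pmf (pmf_of_set {0..<b})). \<omega> i < b"
      by (intro AE_PiM_component) (auto intro: prob_space_measure_pmf)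
  qed
  define S where "S = (\<Sum>k. (\<beta>/\<alpha>)^k)"
  have ba: "\<beta> / \<alpha> < 1" "0 < \<beta> / \<alpha>" using assms(6,9,10) by auto
  have S0: "S \<noteq> 0" unfolding S_def using ba by (subst suminf_geometric) auto
  have ident: "AE \<omega> in digit_space b. Z_var b \<alpha> \<psi> \<omega> = Z_var b \<alpha> \<phi> \<omega> * S"
    using AEdig
  proof (rule AE_mp, intro AE_I2 impI)
    fix \<omega> :: "nat \<Rightarrow> nat" assume "\<forall>i. \<omega> i < b"
    then show "Z_var b \<alpha> \<psi> \<omega> = Z_var b \<alpha> \<phi> \<omega> * S"
      unfolding \<psi>_def S_def
      by (intro Z_identity[OF _ assms(5) H bnd assms(9)]) (use assms in auto)
  qed
  have "\<not> (AE \<omega> in digit_space b. Z_var b \<alpha> \<psi> \<omega> = 0)"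
  proof
    assume "AE \<omega> in digit_space b. Z_var b \<alpha> \<psi> \<omega> = 0"
    with ident have "AE \<omega> in digit_space b. Z_var b \<alpha> \<phi> \<omega> = 0"
      by eventually_elim (use S0 in auto)
    with nAE show False by blast
  qed
  then have "valid_base_function b \<alpha> \<psi>"
    unfolding valid_base_function_def
    using assms(2,3,7) hold p01 ab by blast
  then show ?thesis unfolding \<psi>_def .
qed

end
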